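(* Let $\Sigma$ be a canonical ambiguous experiment. Then $\tau^{*} \in BR(\Sigma)$ if and only if there exists $\pi \in K^{*}(\Sigma)$ such that for all $a, b \in A$, $$\sum_{\omega \in \Omega} \pi(\omega,a)\,[u_r(b,\omega) - u_r(a,\omega)] \le 0.$$
   Context: Setting: $\Omega$ is a finite set of states, $A$ a finite set of receiver actions, $u_r: A \times \Omega \to \mathbb{R}$ the receiver's payoff. $P \subseteq \Delta(\Omega)$ is a nonempty closed convex set of priors; the receiver has maxmin expected utility preferences. A canonical experiment is $\sigma: \Omega \to \Delta(A)$; a canonical ambiguous experiment is a nonempty closed convex set $\Sigma$ of canonical experiments. A receiver strategy is $\tau: A \to \Delta(A)$. $u_r(p,\sigma,\tau) = \sum_{\omega,m,a} p(\omega)\sigma(m\mid\omega)\tau(a\mid m)u_r(a,\omega)$, $U_r(\Sigma,\tau) = \min_{p \in P}\min_{\sigma \in \Sigma} u_r(p,\sigma,\tau)$, and $BR(\Sigma) = \arg\max_{\tau} U_r(\Sigma,\tau)$ over all $\tau: A \to \Delta(A)$. The obedient strategy $\tau^{*}$ is $\tau^{*}(a\mid a) = 1$ for all $a$. For $p \in P$, $\sigma \in \Sigma$, $\pi^{(p,\sigma)} \in \Delta(\Omega \times A)$ is $\pi^{(p,\sigma)}(\omega,a) = p(\omega)\sigma(a\mid\omega)$; $\Pi(\Sigma) = \{\pi^{(p,\sigma)} : p \in P, \sigma \in \Sigma\}$; $\overline{co}(\Pi(\Sigma))$ is its closed convex hull; and $K^{*}(\Sigma) = \arg\min_{\pi \in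 \overline{co}(\Pi(\Sigma))} \sum_{a,\omega} \pi(\omega,a) u_r(a,\omega)$. *)

theory Defs
  imports "HOL-Analysis.Analysis"
begin

text \<open>States are the finite type 'w, actions the finite type 'a.
  A distribution on a finite type is a vector in the probability simplex.\<close>

definition prob_simplex :: "(real^'n) set" where
  "prob_simplex = {p. (\<forall>i. 0 \<le> p $ i) \<and> (\<Sum>i\<in>UNIV. p $ i) = 1}"

text \<open>Canonical experiment: sigma $ w $ m = sigma(m | w).\<close>
definition canonical_experiment :: "real^'a^'w \<Rightarrow> bool" where
  "canonical_experiment \<sigma> \<longleftrightarrow> (\<forall>\<omega>. \<sigma> $ \<omega> \<in> prob_simplex)"

definition canonical_ambiguous_experiment :: "(real^'a^'w) set \<Rightarrow> bool" where
  "canonical_ambiguous_experiment S \<longleftrightarrow>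
     S \<noteq> {} \<and> closed S \<and> convex S \<and> (\<forall>\<sigma>\<in>S. canonical_experiment \<sigma>)"

text \<open>Receiver strategy: tau $ m $ a = tau(a | m).\<close>
definition receiver_strategy :: "real^'a^'a \<Rightarrow> bool" where
  "receiver_strategy \<tau> \<longleftrightarrow> (\<forall>m. \<tau> $ m \<in> prob_simplex)"

definition ur_val :: "('a \<Rightarrow> 'w \<Rightarrow> real) \<Rightarrow> real^'w \<Rightarrow> real^'a^'w \<Rightarrow> real^'a^'a \<Rightarrow> real" where
  "ur_val u p \<sigma> \<tau> =
     (\<Sum>\<omega>\<in>UNIV. \<Sum>m\<in>UNIV. \<Sum>a\<in>UNIV. p $ \<omega> * \<sigma> $ \<omega> $ m * \<tau> $ m $ a * u a \<omega>)"

text \<open>Maxmin utility: min over priors and experiments (an infimum, attained by compactness).\<close>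
definition Ur :: "('a \<Rightarrow> 'w \<Rightarrow> real) \<Rightarrow> (real^'w) set \<Rightarrow> (real^'a^'w) set \<Rightarrow> real^'a^'a \<Rightarrow> real" where
  "Ur u P S \<tau> = Inf {ur_val u p \<sigma> \<tau> | p \<sigma>. p \<in> P \<and> \<sigma> \<in> S}"

definition BR :: "('a \<Rightarrow> 'w \<Rightarrow> real) \<Rightarrow> (real^'w) set \<Rightarrow> (real^'a^'w) set \<Rightarrow> (real^'a^'a) set" where
  "BR u P S = {\<tau>. receiver_strategy \<tau> \<and>
      (\<forall>\<tau>'. receiver_strategy \<tau>' \<longrightarrow> Ur u P S \<tau>' \<le> Ur u P S \<tau>)}"

definition obedient :: "real^'a^'a" where
  "obedient = (\<chi> m a. if a = m then 1 else 0)"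

text \<open>Joint distribution pi^(p,sigma), indexed as pi $ w $ a = pi(w,a).\<close>
definition joint :: "real^'w \<Rightarrow> real^'a^'w \<Rightarrow> real^'a^'w" where
  "joint p \<sigma> = (\<chi> \<omega> a. p $ \<omega> * \<sigma> $ \<omega> $ a)"

definition Pi_set :: "(real^'w) set \<Rightarrow> (real^'a^'w) set \<Rightarrow> (real^'a^'w) set" where
  "Pi_set P S = {joint p \<sigma> | p \<sigma>. p \<in> P \<and> \<sigma> \<in> S}"

definition exp_payoff :: "('a \<Rightarrow> 'w \<Rightarrow> real) \<Rightarrow> real^'a^'w \<Rightarrow> real" where
  "exp_payoff u \<pi> = (\<Sum>a\<in>UNIV. \<Sum>\<omega>\<in>UNIV. \<pi> $ \<omega> $ a * u a \<omega>)"

definition Kstar :: "('a \<Rightarrow> 'w \<Rightarrow> real) \<Rightarrow> (real^'w) set \<Rightarrow> (real^'a^'w) set \<Rightarrow> (real^'a^'w) set" where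
  "Kstar u P S = {\<pi> \<in> closure (convex hull (Pi_set P S)).
      \<forall>\<pi>'\<in>closure (convex hull (Pi_set P S)). exp_payoff u \<pi> \<le> exp_payoff u \<pi>'}"

end

theory Submission
  imports Defs
begin

definition Evec :: "('a::finite \<Rightarrow> 'w::finite \<Rightarrow> real) \<Rightarrow> real^'a^'w" where
  "Evec u = (\<chi> \<omega> m. u m \<omega>)"
definition Wvec :: "('a::finite \<Rightarrow> 'w::finite \<Rightarrow> real) \<Rightarrow> real^'a^'a \<Rightarrow> real^'a^'w" where
  "Wvec u \<tau> = (\<chi> \<omega> m. \<Sum>a\<in>UNIV. \<tau>$m$a * u a \<omega>)"
definition Fmap :: "('a::finite \<Rightarrow> 'w::finite \<Rightarrow> real) \<Rightarrow> real^'a^'w \<Rightarrow> real^'a^'a" where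
  "Fmap u \<pi> = (\<chi> a b. \<Sum>\<omega>\<in>UNIV. \<pi> $ \<omega> $ a * (u b \<omega> - u a \<omega>))"
definition Hvec :: "('a::finite \<Rightarrow> 'w::finite \<Rightarrow> real) \<Rightarrow> real^'a^'a \<Rightarrow> real^'a^'w" where
  "Hvec u y = (\<chi> \<omega> m. \<Sum>b\<in>UNIV. y$m$b * (u b \<omega> - u m \<omega>))"
definition Tstrat :: "real^'a::finite^'a \<Rightarrow> real \<Rightarrow> real^'a^'a" where
  "Tstrat y e = (\<chi> m b. (if b = m then 1 else 0) + e * (y$m$b - (if b = m then (\<Sum>c\<in>UNIV. y$m$c) else 0)))"

lemma inner_nested: "inner (x::real^'a::finite^'w::finite) z = (\<Sum>\<omega>\<in>UNIV. \<Sum>a\<in>UNIV. x$\<omega>$a * z$\<omega>$a)"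
  by (simp add: inner_vec_def)

lemma exp_payoff_inner: "exp_payoff u \<pi> = inner (Evec u) \<pi>"
  unfolding exp_payoff_def inner_nested Evec_def
  by (subst sum.swap) (simp add: mult.commute)

lemma ur_val_inner: "ur_val u p \<sigma> \<tau> = inner (Wvec u \<tau>) (joint p \<sigma>)"
  unfolding ur_val_def inner_nested Wvec_def joint_def
  by (simp add: sum_distrib_left sum_distrib_right mult.commute mult.left_commute)

lemma sum_delta_mult: "(\<Sum>a\<in>(UNIV::'a::finite set). (if a = m then c else 0) * f a) = (c::real) * f m"
proof -
  have "\<And>a. (if a = m then c else 0) * f a = (if a = m then c * f m else 0)" by auto
  then show ?thesis by (simp only: sum.delta) simp
qed

lemma W_obedient: "Wvec u obedient = Evec u"
  unfolding Wvec_def obedient_def Evec_def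
  by (simp add: vec_eq_iff sum_delta_mult)

lemma W_T: "Wvec u (Tstrat y e) = Evec u + e *\<^sub>R Hvec u y"
proof -
  have "(\<Sum>a\<in>UNIV. ((if a = m then 1 else 0) + e * (y$m$a - (if a = m then (\<Sum>c\<in>UNIV. y$m$c) else 0))) * u a \<omega>)
     = u m \<omega> + e * (\<Sum>b\<in>UNIV. y$m$b * (u b \<omega> - u m \<omega>))" for m \<omega>
  proof -
    have "(\<Sum>a\<in>UNIV. ((if a = m then 1 else 0) + e * (y$m$a - (if a = m then (\<Sum>c\<in>UNIV. y$m$c) else 0))) * u a \<omega>)
       = (\<Sum>a\<in>UNIV. (if a = m then 1 else 0) * u a \<omega>) + e * (\<Sum>a\<in>UNIV. y$m$a * u a \<omega>)
         - e * (\<Sum>a\<in>UNIV. (if a = m then (\<Sum>c\<in>UNIV. y$m$c) else 0) * u a \<omega>)"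
      by (simp add: algebra_simps sum.distrib sum_subtractf sum_distrib_left)
    also have "\<dots> = u m \<omega> + e * (\<Sum>b\<in>UNIV. y$m$b * (u b \<omega> - u m \<omega>))"
      by (simp only: sum_delta_mult) (simp add: algebra_simps sum_subtractf sum_distrib_left sum_distrib_right)
    finally show ?thesis .
  qed
  then show ?thesis
    by (simp add: Wvec_def Tstrat_def Evec_def Hvec_def vec_eq_iff)
qed

lemma H_F: "inner (Hvec u y) \<pi> = inner y (Fmap u \<pi>)"
  unfolding inner_nested Hvec_def Fmap_def
  apply (simp add: sum_distrib_left sum_distrib_right algebra_simps)
  apply (subst (2) sum.swap)
  apply (rule sum.cong, simp)
  apply (subst sum.swap)
  apply (simp add: algebra_simps)
  done

lemma linear_F: "linear (Fmap u)"
  by (rule linearI) (simp_all add: Fmap_def vec_eq_iff sum.distrib[symmetric] sum_subtractf[symmetric] sum_distrib_left algebra_simps)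

lemma lin_lb:
  assumes "\<forall>x\<in>X. c \<le> inner z x" "x \<in> closure (convex hull X)"
  shows "c \<le> inner z x"
proof -
  have "convex hull X \<subseteq> {x. c \<le> inner z x}"
    using assms(1) by (intro hull_minimal) (auto simp: convex_halfspace_ge)
  then have "closure (convex hull X) \<subseteq> {x. c \<le> inner z x}"
    by (intro closure_minimal) (auto simp: closed_halfspace_ge)
  then show ?thesis using assms(2) by auto
qed

lemma obedient_strategy: "receiver_strategy obedient"
  unfolding receiver_strategy_def obedient_def prob_simplex_def by simp


lemma simplex_le1: "p \<in> prob_simplex \<Longrightarrow> 0 \<le> p$i \<and> p$i \<le> 1"
proof -
  assume p: "p \<in> prob_simplex"
  have "p$i \<le> (\<Sum>j\<in>UNIV. p$j)" using p unfolding prob_simplex_def by (intro member_le_sum) auto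
  then show ?thesis using p unfolding prob_simplex_def by auto
qed

lemma norm_nested_le: "norm (x::real^'a::finite^'w::finite) \<le> (\<Sum>\<omega>\<in>UNIV. \<Sum>a\<in>UNIV. \<bar>x$\<omega>$a\<bar>)"
proof -
  have "norm x \<le> (\<Sum>\<omega>\<in>UNIV. norm (x$\<omega>))"
    unfolding norm_vec_def by (rule L2_set_le_sum) simp
  also have "\<dots> \<le> (\<Sum>\<omega>\<in>UNIV. \<Sum>a\<in>UNIV. \<bar>x$\<omega>$a\<bar>)"
    by (intro sum_mono norm_le_l1_cart)
  finally show ?thesis .
qed

lemma bounded_Pi:
  assumes "P \<subseteq> prob_simplex" "\<forall>\<sigma>\<in>S. canonical_experiment \<sigma>"
  shows "bounded (Pi_set P S :: (real^'a::finite^'w::finite) set)"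
  unfolding bounded_iff
proof (intro exI ballI)
  fix x :: "real^'a^'w" assume "x \<in> Pi_set P S"
  then obtain p \<sigma> where x: "x = joint p \<sigma>" "p \<in> P" "\<sigma> \<in> S" by (auto simp: Pi_set_def)
  have "\<bar>x$\<omega>$a\<bar> \<le> 1" for \<omega> a
  proof -
    have "0 \<le> p$\<omega> \<and> p$\<omega> \<le> 1" using x assms simplex_le1 by blast
    moreover have "0 \<le> \<sigma>$\<omega>$a \<and> \<sigma>$\<omega>$a \<le> 1"
      using x assms simplex_le1 unfolding canonical_experiment_def by blast
    ultimately show ?thesis using x by (simp add: joint_def mult_le_one)
  qed
  then have "(\<Sum>\<omega>\<in>UNIV. \<Sum>a\<in>UNIV. \<bar>x$\<omega>$a\<bar>) \<le> (\<Sum>\<omega>\<in>(UNIV::'w set). \<Sum>a\<in>(UNIV::'a set). 1)"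
    by (intro sum_mono) auto
  then show "norm x \<le> real (CARD('w) * CARD('a))"
    using norm_nested_le[of x] by simp
qed

lemma Ur_eq: "Ur u P S \<tau> = Inf ((\<lambda>x. inner (Wvec u \<tau>) x) ` Pi_set P S)"
  unfolding Ur_def Pi_set_def
  by (rule arg_cong[where f=Inf]) (auto simp: ur_val_inner)

lemma Ur_le:
  assumes "Pi_set P S \<noteq> {}" "bounded (Pi_set P S)" "x \<in> closure (convex hull (Pi_set P S))"
  shows "Ur u P S \<tau> \<le> inner (Wvec u \<tau>) x"
proof -
  let ?I = "(\<lambda>x. inner (Wvec u \<tau>) x) ` Pi_set P S"
  have "bounded ?I"
    by (rule bounded_linear_image[OF assms(2)]) (rule bounded_linear_inner_right)
  then have bdd: "bdd_below ?I" by (rule bounded_imp_bdd_below)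
  have "\<forall>z\<in>Pi_set P S. Ur u P S \<tau> \<le> inner (Wvec u \<tau>) z"
    unfolding Ur_eq using bdd by (auto intro: cInf_lower)
  then show ?thesis using lin_lb assms(3) by blast
qed

lemma Ur_ge:
  assumes "Pi_set P S \<noteq> {}" "\<forall>z\<in>closure (convex hull (Pi_set P S)). c \<le> inner (Evec u) z"
  shows "c \<le> Ur u P S obedient"
  unfolding Ur_eq W_obedient
proof (rule cInf_greatest)
  show "(\<lambda>x. inner (Evec u) x) ` Pi_set P S \<noteq> {}" using assms(1) by simp
  fix z assume "z \<in> (\<lambda>x. inner (Evec u) x) ` Pi_set P S"
  then show "c \<le> z" using assms(2) hull_subset[of "Pi_set P S" convex] closure_subset by blast
qed

lemma T_strategy:
  fixes y :: "real^'a::finite^'a"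
  assumes "\<forall>a b. 0 \<le> y$a$b" "0 \<le> e" "e * (\<Sum>a\<in>UNIV. \<Sum>b\<in>UNIV. y$a$b) \<le> 1"
  shows "receiver_strategy (Tstrat y e)"
  unfolding receiver_strategy_def prob_simplex_def
proof (intro allI CollectI conjI)
  fix m b
  have "(\<Sum>c\<in>UNIV. y$m$c) \<le> (\<Sum>a\<in>UNIV. \<Sum>b\<in>UNIV. y$a$b)"
    using assms(1) by (intro member_le_sum[where f="\<lambda>a. \<Sum>b\<in>UNIV. y$a$b"]) (auto intro: sum_nonneg)
  then have "e * (\<Sum>c\<in>UNIV. y$m$c) \<le> 1" using assms(2,3) mult_left_mono order_trans by blast
  moreover have "0 \<le> e * y$m$b" using assms by simp
  ultimately show "0 \<le> Tstrat y e $ m $ b"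
    by (auto simp: algebra_simps Tstrat_def)
next
  fix m
  show "(\<Sum>b\<in>UNIV. Tstrat y e $ m $ b) = 1"
    by (simp add: Tstrat_def sum.distrib sum_subtractf sum_distrib_left[symmetric] algebra_simps)
qed

lemma obed_ineq:
  assumes "receiver_strategy \<tau>" "\<forall>a b. (\<Sum>\<omega>\<in>UNIV. \<pi> $ \<omega> $ a * (u b \<omega> - u a \<omega>)) \<le> 0"
  shows "inner (Wvec u \<tau>) \<pi> \<le> inner (Evec u) \<pi>"
proof -
  have "inner (Wvec u \<tau>) \<pi> = (\<Sum>m\<in>UNIV. \<Sum>a\<in>UNIV. \<tau>$m$a * (\<Sum>\<omega>\<in>UNIV. \<pi>$\<omega>$m * u a \<omega>))"
  proof -
    have "inner (Wvec u \<tau>) \<pi> = (\<Sum>\<omega>\<in>UNIV. \<Sum>m\<in>UNIV. \<Sum>a\<in>UNIV. \<tau>$m$a * (\<pi>$\<omega>$m * u a \<omega>))"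
      unfolding inner_nested Wvec_def
      by (simp add: sum_distrib_left sum_distrib_right algebra_simps)
    also have "\<dots> = (\<Sum>m\<in>UNIV. \<Sum>\<omega>\<in>UNIV. \<Sum>a\<in>UNIV. \<tau>$m$a * (\<pi>$\<omega>$m * u a \<omega>))"
      by (rule sum.swap)
    also have "\<dots> = (\<Sum>m\<in>UNIV. \<Sum>a\<in>UNIV. \<Sum>\<omega>\<in>UNIV. \<tau>$m$a * (\<pi>$\<omega>$m * u a \<omega>))"
      by (rule sum.cong[OF refl], rule sum.swap)
    finally show ?thesis by (simp add: sum_distrib_left)
  qed
  also have "\<dots> \<le> (\<Sum>m\<in>UNIV. \<Sum>a\<in>UNIV. \<tau>$m$a * (\<Sum>\<omega>\<in>UNIV. \<pi>$\<omega>$m * u m \<omega>))"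
  proof (intro sum_mono, rule mult_left_mono)
    fix m a
    show "0 \<le> \<tau>$m$a" using assms(1) unfolding receiver_strategy_def prob_simplex_def by blast
    have "(\<Sum>\<omega>\<in>UNIV. \<pi> $ \<omega> $ m * (u a \<omega> - u m \<omega>)) \<le> 0" using assms(2) by blast
    then show "(\<Sum>\<omega>\<in>UNIV. \<pi>$\<omega>$m * u a \<omega>) \<le> (\<Sum>\<omega>\<in>UNIV. \<pi>$\<omega>$m * u m \<omega>)"
      by (simp add: algebra_simps sum_subtractf)
  qed
  also have "\<dots> = (\<Sum>m\<in>UNIV. (\<Sum>\<omega>\<in>UNIV. \<pi>$\<omega>$m * u m \<omega>))"
  proof (rule sum.cong, simp)
    fix m
    have "(\<Sum>a\<in>UNIV. \<tau>$m$a) = 1" using assms(1) unfolding receiver_strategy_def prob_simplex_def by blast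
    then show "(\<Sum>a\<in>UNIV. \<tau>$m$a * (\<Sum>\<omega>\<in>UNIV. \<pi>$\<omega>$m * u m \<omega>)) = (\<Sum>\<omega>\<in>UNIV. \<pi>$\<omega>$m * u m \<omega>)"
      by (simp add: sum_distrib_right[symmetric])
  qed
  also have "\<dots> = inner (Evec u) \<pi>"
    unfolding inner_nested Evec_def by (subst sum.swap) (simp add: mult.commute)
  finally show ?thesis .
qed


lemma key:
  fixes u :: "'a::finite \<Rightarrow> 'w::finite \<Rightarrow> real" and y :: "real^'a^'a"
  assumes ne: "Pi_set P S \<noteq> {}" and bd: "bounded (Pi_set P S)"
    and br: "obedient \<in> BR u P S" and y: "\<forall>a b. 0 \<le> y$a$b"
  shows "\<exists>\<pi>\<in>Kstar u P S. inner y (Fmap u \<pi>) \<le> 0"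
proof -
  define K where "K = closure (convex hull (Pi_set P S))"
  define v where "v = Ur u P S obedient"
  define Y where "Y = (\<Sum>a\<in>UNIV. \<Sum>b\<in>UNIV. y$a$b)"
  define e0 where "e0 = 1 / (1 + Y)"
  define e where "e n = e0 / real (Suc n)" for n
  define E where "E = Evec u"
  define H where "H = Hvec u y"
  have Y0: "0 \<le> Y" unfolding Y_def using y by (intro sum_nonneg) auto
  have e0pos: "0 < e0" unfolding e0_def using Y0 by simp
  have e0Y: "e0 * Y \<le> 1" unfolding e0_def using Y0 by (simp add: field_simps)
  have epos: "0 < e n" for n unfolding e_def using e0pos by simp
  have ele: "e n \<le> e0" for n unfolding e_def using e0pos by (simp add: field_simps)
  have eY: "e n * Y \<le> 1" for n
    using mult_right_mono[OF ele Y0, of n] e0Y by linarith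
  have strat: "receiver_strategy (Tstrat y (e n))" for n
    using T_strategy[OF y less_imp_le[OF epos] eY[unfolded Y_def]] .
  have Urle: "Ur u P S (Tstrat y (e n)) \<le> v" for n
    using br strat unfolding BR_def v_def by blast
  have vle: "\<forall>z\<in>K. v \<le> inner E z"
    using Ur_le[OF ne bd, of _ u obedient] unfolding K_def v_def E_def W_obedient by blast
  have PiK: "Pi_set P S \<subseteq> K" unfolding K_def
    using hull_subset[of "Pi_set P S" convex] closure_subset by blast
  have "\<exists>x. x \<in> Pi_set P S \<and> inner E x + e n * inner H x < v + (e n)^2" for n
  proof -
    have eq: "Ur u P S (Tstrat y (e n)) = Inf ((\<lambda>x. inner E x + e n * inner H x) ` Pi_set P S)"
      unfolding Ur_eq W_T E_def H_def by (simp add: inner_add_left)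
    have "Ur u P S (Tstrat y (e n)) < v + (e n)^2" using Urle[of n] epos[of n] by (smt (verit) zero_less_power)
    then show ?thesis unfolding eq using cInf_lessD[of "(\<lambda>x. inner E x + e n * inner H x) ` Pi_set P S"] ne
      by auto
  qed
  then obtain x where x: "\<And>n. x n \<in> Pi_set P S \<and> inner E (x n) + e n * inner H (x n) < v + (e n)^2"
    by metis
  have xK: "x n \<in> K" for n using x PiK by blast
  have Hlt: "inner H (x n) \<le> e n" for n
  proof -
    have "v \<le> inner E (x n)" using vle xK by blast
    then have "e n * inner H (x n) < e n * e n" using x[of n] by (simp add: power2_eq_square)
    then show ?thesis using epos[of n] by (simp add: mult_less_cancel_left_pos)
  qed
  have Eub: "inner E (x n) \<le> v + (e n)^2 - e n * inner H (x n)" for n using x[of n] by simp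
  have cK: "compact K" unfolding K_def using bd by (simp add: bounded_convex_hull)
  obtain l r where l: "l \<in> K" "strict_mono r" "(x \<circ> r) \<longlonglongrightarrow> l"
    using compact_imp_seq_compact[OF cK] xK unfolding seq_compact_def by metis
  have elim: "e \<longlonglongrightarrow> 0" unfolding e_def
    using LIMSEQ_Suc[OF lim_const_over_n[of e0]] by simp
  have er: "(\<lambda>n. e (r n)) \<longlonglongrightarrow> 0" using LIMSEQ_subseq_LIMSEQ[OF elim l(2)] by (simp add: o_def)
  have xr: "(\<lambda>n. x (r n)) \<longlonglongrightarrow> l" using l(3) by (simp add: o_def)
  have Hl: "(\<lambda>n. inner H (x (r n))) \<longlonglongrightarrow> inner H l" by (intro tendsto_inner tendsto_const xr)
  have El: "(\<lambda>n. inner E (x (r n))) \<longlonglongrightarrow> inner E l" by (intro tendsto_inner tendsto_const xr)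
  have H0: "inner H l \<le> 0"
    by (rule tendsto_le[OF trivial_limit_sequentially er Hl]) (simp add: Hlt)
  have R: "(\<lambda>n. v + (e (r n))^2 - e (r n) * inner H (x (r n))) \<longlonglongrightarrow> v + 0^2 - 0 * inner H l"
    by (intro tendsto_intros er Hl)
  have El0: "inner E l \<le> v"
    using tendsto_le[OF trivial_limit_sequentially R El] Eub by simp
  have "l \<in> Kstar u P S"
    unfolding Kstar_def exp_payoff_inner using l(1) El0 vle unfolding K_def E_def by force
  moreover have "inner y (Fmap u l) \<le> 0" using H0 H_F unfolding H_def by metis
  ultimately show ?thesis by blast
qed


theorem mainTheorem6:
  fixes u :: "'a::finite \<Rightarrow> 'w::finite \<Rightarrow> real"
    and P :: "(real^'w) set"
    and S :: "(real^'a^'w) set"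
  assumes "P \<noteq> {}" and "closed P" and "convex P" and "P \<subseteq> prob_simplex"
    and "canonical_ambiguous_experiment S"
  shows "obedient \<in> BR u P S \<longleftrightarrow>
    (\<exists>\<pi>\<in>Kstar u P S. \<forall>a b. (\<Sum>\<omega>\<in>UNIV. \<pi> $ \<omega> $ a * (u b \<omega> - u a \<omega>)) \<le> 0)"
proof -
  define K where "K = closure (convex hull (Pi_set P S))"
  have Sne: "S \<noteq> {}" and Scan: "\<forall>\<sigma>\<in>S. canonical_experiment \<sigma>"
    using assms(5) unfolding canonical_ambiguous_experiment_def by auto
  have ne: "Pi_set P S \<noteq> {}" using assms(1) Sne unfolding Pi_set_def by blast
  have bd: "bounded (Pi_set P S)" using bounded_Pi[OF assms(4) Scan] .
  have KS: "Kstar u P S = {\<pi>\<in>K. \<forall>\<pi>'\<in>K. inner (Evec u) \<pi> \<le> inner (Evec u) \<pi>'}"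
    unfolding Kstar_def exp_payoff_inner K_def ..
  show ?thesis
  proof
    assume br: "obedient \<in> BR u P S"
    show "\<exists>\<pi>\<in>Kstar u P S. \<forall>a b. (\<Sum>\<omega>\<in>UNIV. \<pi> $ \<omega> $ a * (u b \<omega> - u a \<omega>)) \<le> 0"
    proof (rule ccontr)
      assume nex: "\<not> ?thesis"
      define N where "N = {z::real^'a^'a. \<forall>a b. z$a$b \<le> 0}"
      have KSne: "Kstar u P S \<noteq> {}" using key[OF ne bd br, of 0] by auto
      have cK: "compact K" unfolding K_def using bd by (simp add: bounded_convex_hull)
      have KS2: "Kstar u P S = K \<inter> (\<Inter>\<pi>'\<in>K. {\<pi>. inner (Evec u) \<pi> \<le> inner (Evec u) \<pi>'})"
        unfolding KS by auto
      have cKS: "compact (Kstar u P S)" unfolding KS2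
        by (intro compact_Int_closed cK closed_INT) (auto simp: closed_halfspace_le)
      have vKS: "convex (Kstar u P S)" unfolding KS2 K_def
        by (intro convex_Int convex_closure convex_convex_hull convex_INT) (auto simp: convex_halfspace_le)
      have linF: "linear (Fmap u)" by (rule linear_F)
      then have blF: "bounded_linear (Fmap u)" by (simp add: linear_conv_bounded_linear)
      have c1: "compact (Fmap u ` Kstar u P S)"
        by (rule compact_continuous_image[OF linear_continuous_on[OF blF] cKS])
      have c2: "convex (Fmap u ` Kstar u P S)" by (rule convex_linear_image[OF linF vKS])
      have c3: "Fmap u ` Kstar u P S \<noteq> {}" using KSne by simp
      have cN: "closed N" unfolding N_def
        by (intro closed_Collect_all closed_Collect_le continuous_intros)
      have vN: "convex N" unfolding N_def convex_def
        by (auto intro!: add_nonpos_nonpos mult_nonneg_nonpos)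
      have disj: "Fmap u ` Kstar u P S \<inter> N = {}"
        using nex unfolding N_def Fmap_def by auto
      obtain a b0 where ab: "\<forall>x\<in>Fmap u ` Kstar u P S. inner a x < b0" "\<forall>z\<in>N. b0 < inner a z"
        using separating_hyperplane_compact_closed[OF c2 c1 c3 vN cN disj] by blast
      have "0 \<in> N" unfolding N_def by simp
      then have b0: "b0 < 0" using ab(2) by fastforce
      have anp: "a$i$j \<le> 0" for i j
      proof (rule ccontr)
        assume "\<not> a$i$j \<le> 0"
        then have pos: "0 < a$i$j" by simp
        define t where "t = - b0 / a$i$j"
        have t: "0 < t" unfolding t_def using pos b0 by (simp add: field_simps)
        define z where "z = (- t) *\<^sub>R axis i (axis j (1::real))"
        have "z \<in> N" unfolding z_def N_def axis_def using t by auto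
        moreover have "inner a z = b0" unfolding z_def using pos
          by (simp add: inner_axis t_def)
        ultimately show False using ab(2) by fastforce
      qed
      have y: "\<forall>i j. 0 \<le> (-a)$i$j" using anp by simp
      obtain \<pi> where "\<pi> \<in> Kstar u P S" "inner (-a) (Fmap u \<pi>) \<le> 0" using key[OF ne bd br y] by blast
      then show False using ab(1) b0 by fastforce
    qed
  next
    assume "\<exists>\<pi>\<in>Kstar u P S. \<forall>a b. (\<Sum>\<omega>\<in>UNIV. \<pi> $ \<omega> $ a * (u b \<omega> - u a \<omega>)) \<le> 0"
    then obtain \<pi> where pK: "\<pi> \<in> Kstar u P S"
      and ob: "\<forall>a b. (\<Sum>\<omega>\<in>UNIV. \<pi> $ \<omega> $ a * (u b \<omega> - u a \<omega>)) \<le> 0" by blast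
    have piK: "\<pi> \<in> K" and pmin: "\<forall>z\<in>K. inner (Evec u) \<pi> \<le> inner (Evec u) z"
      using pK unfolding KS by auto
    have "Ur u P S \<tau> \<le> Ur u P S obedient" if "receiver_strategy \<tau>" for \<tau>
    proof -
      have "Ur u P S \<tau> \<le> inner (Wvec u \<tau>) \<pi>" using Ur_le[OF ne bd] piK unfolding K_def by blast
      also have "\<dots> \<le> inner (Evec u) \<pi>" by (rule obed_ineq[OF that ob])
      also have "\<dots> \<le> Ur u P S obedient" using Ur_ge[OF ne] pmin unfolding K_def by blast
      finally show ?thesis .
    qed
    then show "obedient \<in> BR u P S" unfolding BR_def using obedient_strategy by blast
  qed
qed

end
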